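(* Let $n\ge3$ be odd. Then $h(n)=\frac{1}{2n}\cot\frac{\pi}{2n}$, and moreover $h(n)=\operatorname{Im}\lambda_{(n-1)/2}(n)$, where $\lambda_k(n)=\frac1n\big(k-\sum_{j=1}^k e^{-2\pi\mathrm i j/n}\big)$.
   Context: A standardized Laplacian matrix of order $n$ is a real $n\times n$ matrix whose row sums are all $0$ and whose off-diagonal entries are nonpositive with absolute value at most $1/n$. $h(n)$ is the supremum of $\operatorname{Im}\lambda$ over all eigenvalues $\lambda$ of all standardized Laplacian matrices of order $n$. *)

theory Defs
  imports Complex_Main "Jordan_Normal_Form.Char_Poly"
begin

definition std_laplacian :: "nat \<Rightarrow> real mat \<Rightarrow> bool" where
  "std_laplacian n A \<longleftrightarrow> A \<in> carrier_mat n n \<and>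
     (\<forall>i<n. (\<Sum>j<n. A $$ (i, j)) = 0) \<and>
     (\<forall>i<n. \<forall>j<n. i \<noteq> j \<longrightarrow> A $$ (i, j) \<le> 0 \<and> \<bar>A $$ (i, j)\<bar> \<le> 1 / real n)"

definition h :: "nat \<Rightarrow> real" where
  "h n = Sup {Im ev | ev A. std_laplacian n A \<and> eigenvalue (map_mat complex_of_real A) ev}"

definition lam :: "nat \<Rightarrow> nat \<Rightarrow> complex" where
  "lam n k = (1 / of_nat n) * (of_nat k - (\<Sum>j=1..k. exp (- 2 * pi * \<i> * of_nat j / of_nat n)))"

end

theory Submission
  imports Defs
begin


definition EE :: "nat \<Rightarrow> nat \<Rightarrow> nat \<Rightarrow> complex" where
  "EE n m k = cis (pi * real (2*m+1) * real k / real n)"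

lemma cis_ne_1:
  assumes "cos x \<noteq> 1" shows "cis x \<noteq> 1"
  using assms by (metis cis.simps(1) one_complex.simps(1))

lemma EE_ortho:
  assumes n: "n > 0" and k: "k < n" and l: "l < n"
  shows "(\<Sum>m<n. cnj (EE n m l) * EE n m k) = (if k = l then of_nat n else 0)"
proof (cases "k = l")
  case True
  then show ?thesis by (simp add: EE_def cis_cnj cis_mult)
next
  case False
  define d where "d = real k - real l"
  have d0: "d \<noteq> 0" using False by (simp add: d_def)
  have dlt: "\<bar>d\<bar> < real n" using k l by (auto simp: d_def)
  define q where "q = cis (2 * pi * d / real n)"
  have tm: "cnj (EE n m l) * EE n m k = cis (pi * d / real n) * q ^ m" for m
    unfolding EE_def q_def d_def using n
    by (simp add: cis_cnj cis_mult DeMoivre field_simps)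
  have qn: "q ^ n = 1"
  proof -
    have "q ^ n = cis (2 * pi * d)" using n by (simp add: q_def DeMoivre field_simps)
    moreover have "d \<in> \<int>" unfolding d_def by simp
    ultimately show ?thesis by simp
  qed
  have q1: "q \<noteq> 1"
  proof
    assume "q = 1"
    then have "cos (2 * pi * d / real n) = 1"
      by (metis cis.simps(1) one_complex.simps(1) q_def)
    then obtain j :: int where j: "2 * pi * d / real n = real_of_int j * 2 * pi"
      using cos_one_2pi_int by auto
    then have dj: "d = real_of_int j * real n" using n by (simp add: field_simps)
    then have "j \<noteq> 0" using d0 by auto
    then have "1 \<le> \<bar>real_of_int j\<bar>" by linarith
    then have "real n \<le> \<bar>real_of_int j\<bar> * real n" using n by simp
    also have "\<dots> = \<bar>d\<bar>" using dj by (simp add: abs_mult)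
    finally show False using dlt by simp
  qed
  have "(\<Sum>m<n. cnj (EE n m l) * EE n m k) = cis (pi * d / real n) * (\<Sum>m<n. q ^ m)"
    by (simp add: tm sum_distrib_left)
  also have "(\<Sum>m<n. q ^ m) = 0" using geometric_sum[OF q1, of n] qn by simp
  finally show ?thesis using False by simp
qed

definition bb :: "nat \<Rightarrow> nat \<Rightarrow> complex" where
  "bb k l = (if k < l then 1 else if l < k then -1 else 0) / (2 * \<i>)"

lemma sum_sign_split:
  fixes x :: "nat \<Rightarrow> complex"
  assumes "k < n"
  shows "(\<Sum>l<n. (if k < l then 1 else if l < k then -1 else 0) * x l)
       = (\<Sum>l<n. x l) - (\<Sum>l<Suc k. x l) - (\<Sum>l<k. x l)"
proof -
  have e: "(if k < l then 1 else if l < k then -1 else 0) * x l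
      = x l - (if l < Suc k then x l else 0) - (if l < k then x l else 0)" for l
    by auto
  have a: "(\<Sum>l<n. if l < Suc k then x l else 0) = (\<Sum>l<Suc k. x l)"
  proof -
    have "{..<n} \<inter> {l. l < Suc k} = {..<Suc k}" using assms by auto
    then show ?thesis by (simp add: sum.If_cases)
  qed
  have b: "(\<Sum>l<n. if l < k then x l else 0) = (\<Sum>l<k. x l)"
  proof -
    have "{..<n} \<inter> {l. l < k} = {..<k}" using assms by auto
    then show ?thesis by (simp add: sum.If_cases)
  qed
  show ?thesis unfolding e sum_subtractf a b ..
qed

lemma cis_ratio:
  assumes "sin t \<noteq> 0"
  shows "- (cis (2*t) + 1) / (cis (2*t) - 1) / (2 * \<i>) = complex_of_real (cot t / 2)"
proof -
  have c2: "cos (2*t) = 2*(cos t)^2 - 1" by (simp add: cos_double_cos)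
  have s2: "sin (2*t) = 2*sin t*cos t" by (rule sin_double)
  have p: "cis (2*t) + 1 = cis t * complex_of_real (2 * cos t)"
    unfolding complex_eq_iff by (simp add: c2 s2 power2_eq_square)
  have sq: "cos t * cos t = 1 - sin t * sin t"
    by (metis add_diff_cancel_right' sin_cos_squared_add3)
  have m: "cis (2*t) - 1 = cis t * (\<i> * complex_of_real (2 * sin t))"
    unfolding complex_eq_iff
    by (simp add: c2 s2 power2_eq_square) (simp add: sq algebra_simps)
  have nz: "cis t \<noteq> 0" by (metis cis_neq_zero)
  show ?thesis using assms nz unfolding p m cot_def
    by (simp add: field_simps complex_eq_iff)
qed

lemma EE_pow:
  assumes "n > 0"
  shows "EE n m l = EE n m 1 ^ l"
  unfolding EE_def DeMoivre using assms by (simp add: field_simps)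

lemma EE_eigen:
  assumes n: "n > 0" and m: "m < n" and k: "k < n"
  shows "(\<Sum>l<n. bb k l * EE n m l)
       = complex_of_real (cot (pi * real (2*m+1) / (2 * real n)) / 2) * EE n m k"
proof -
  define \<rho> where "\<rho> = EE n m 1"
  define t where "t = pi * real (2*m+1) / (2 * real n)"
  have rho: "\<rho> = cis (2*t)" unfolding \<rho>_def EE_def t_def using n
    by (intro arg_cong[where f=cis]) (simp add: field_simps)
  have rn: "\<rho> ^ n = -1"
  proof -
    have "\<rho> ^ n = cis (real n * (2*t))" by (simp add: rho DeMoivre)
    also have "real n * (2*t) = 2 * pi * real m + pi" unfolding t_def using n by (simp add: field_simps)
    also have "cis (2 * pi * real m + pi) = cis (2 * pi * real m) * cis pi" by (rule cis_mult[symmetric])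
    also have "\<dots> = -1" by simp
    finally show ?thesis .
  qed
  have r1: "\<rho> \<noteq> 1" using rn by (metis one_neq_neg_one power_one)
  have r1': "\<rho> - 1 \<noteq> 0" using r1 by simp
  have t0: "0 < t" unfolding t_def using n by simp
  have tpi: "t < pi"
  proof -
    have "real (2*m+1) < 2 * real n" using m by linarith
    then have "pi * real (2*m+1) < pi * (2 * real n)" by simp
    then show ?thesis unfolding t_def using n by (simp add: field_simps)
  qed
  have st: "sin t \<noteq> 0" using sin_gt_zero[OF t0 tpi] by simp
  have ep: "EE n m l = \<rho> ^ l" for l unfolding \<rho>_def by (rule EE_pow[OF n])
  have "(\<Sum>l<n. bb k l * EE n m l)
      = (\<Sum>l<n. (if k < l then 1 else if l < k then -1 else 0) * \<rho> ^ l) / (2 * \<i>)"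
    by (simp only: bb_def ep times_divide_eq_left sum_divide_distrib)
  also have "(\<Sum>l<n. (if k < l then 1 else if l < k then -1 else 0) * \<rho> ^ l)
      = (\<Sum>l<n. \<rho> ^ l) - (\<Sum>l<Suc k. \<rho> ^ l) - (\<Sum>l<k. \<rho> ^ l)"
    by (rule sum_sign_split[OF k])
  also have "\<dots> = (\<rho>^n - 1)/(\<rho> - 1) - (\<rho>^Suc k - 1)/(\<rho> - 1) - (\<rho>^k - 1)/(\<rho> - 1)"
    by (simp only: geometric_sum[OF r1])
  also have "\<dots> = ((\<rho>^n - 1) - (\<rho>^Suc k - 1) - (\<rho>^k - 1))/(\<rho> - 1)"
    by (simp only: diff_divide_distrib)
  also have "(\<rho>^n - 1) - (\<rho>^Suc k - 1) - (\<rho>^k - 1) = \<rho> ^ k * (- (\<rho> + 1))"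
    using rn by (simp add: algebra_simps)
  also have "\<rho> ^ k * (- (\<rho> + 1)) / (\<rho> - 1) = \<rho> ^ k * (- (\<rho> + 1) / (\<rho> - 1))"
    by simp
  finally have "(\<Sum>l<n. bb k l * EE n m l) = \<rho> ^ k * (- (\<rho> + 1) / (\<rho> - 1) / (2 * \<i>))"
    by simp
  also have "- (\<rho> + 1) / (\<rho> - 1) / (2 * \<i>) = complex_of_real (cot t / 2)"
    unfolding rho by (rule cis_ratio[OF st])
  finally show ?thesis unfolding t_def using ep[of k] by simp
qed

lemma cot_antimono:
  assumes "0 < a" "a \<le> b" "b < pi"
  shows "cot b \<le> cot a"
proof -
  have sa: "sin a > 0" using assms by (intro sin_gt_zero) auto
  have sb: "sin b > 0" using assms by (intro sin_gt_zero) auto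
  have "sin (b - a) \<ge> 0" using assms by (intro sin_ge_zero) auto
  then have "cos b * sin a \<le> cos a * sin b" by (simp add: sin_diff algebra_simps)
  then show ?thesis using sa sb by (simp add: cot_def divide_simps mult.commute)
qed

lemma quad_bound:
  fixes w :: "nat \<Rightarrow> complex"
  assumes n: "n > 0"
  shows "Re (\<Sum>i<n. \<Sum>j<n. cnj (w i) * bb i j * w j)
         \<le> cot (pi / (2 * real n)) / 2 * (\<Sum>i<n. (cmod (w i))^2)"
proof -
  define c where "c m = (\<Sum>l<n. cnj (EE n m l) * w l)" for m
  define \<mu> where "\<mu> m = cot (pi * real (2*m+1) / (2 * real n)) / 2" for m
  have compl: "w k = (\<Sum>m<n. c m * EE n m k) / of_nat n" if k: "k < n" for k
  proof -
    have "(\<Sum>m<n. c m * EE n m k) = (\<Sum>m<n. \<Sum>l<n. w l * (cnj (EE n m l) * EE n m k))"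
      unfolding c_def sum_distrib_right by (simp add: algebra_simps)
    also have "\<dots> = (\<Sum>l<n. w l * (\<Sum>m<n. cnj (EE n m l) * EE n m k))"
      by (subst sum.swap) (simp add: sum_distrib_left)
    also have "\<dots> = (\<Sum>l<n. if l = k then w l * of_nat n else 0)"
      by (intro sum.cong refl) (simp add: EE_ortho[OF n k])
    also have "\<dots> = w k * of_nat n" using k by simp
    finally show ?thesis using n by simp
  qed
  have cc: "cnj (c m) = (\<Sum>l<n. EE n m l * cnj (w l))" for m
    unfolding c_def by (simp add: cnj_sum)
  have Bw: "(\<Sum>j<n. bb i j * w j) = (\<Sum>m<n. c m * of_real (\<mu> m) * EE n m i) / of_nat n"
    if i: "i < n" for i
  proof -
    have "(\<Sum>j<n. bb i j * w j) = (\<Sum>j<n. bb i j * ((\<Sum>m<n. c m * EE n m j) / of_nat n))"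
      by (intro sum.cong refl) (metis compl lessThan_iff)
    also have "\<dots> = (\<Sum>j<n. \<Sum>m<n. c m * (bb i j * EE n m j)) / of_nat n"
      by (simp add: sum_divide_distrib sum_distrib_left algebra_simps)
    also have "(\<Sum>j<n. \<Sum>m<n. c m * (bb i j * EE n m j)) = (\<Sum>m<n. c m * (\<Sum>j<n. bb i j * EE n m j))"
      by (subst sum.swap) (simp add: sum_distrib_left)
    also have "\<dots> = (\<Sum>m<n. c m * of_real (\<mu> m) * EE n m i)"
      by (intro sum.cong refl) (simp add: EE_eigen[OF n _ i] \<mu>_def)
    finally show ?thesis .
  qed
  have Q: "(\<Sum>i<n. \<Sum>j<n. cnj (w i) * bb i j * w j)
        = of_real ((\<Sum>m<n. \<mu> m * (cmod (c m))^2) / real n)"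
  proof -
    have "(\<Sum>i<n. \<Sum>j<n. cnj (w i) * bb i j * w j) = (\<Sum>i<n. cnj (w i) * (\<Sum>j<n. bb i j * w j))"
      by (simp add: sum_distrib_left mult.assoc)
    also have "\<dots> = (\<Sum>i<n. cnj (w i) * ((\<Sum>m<n. c m * of_real (\<mu> m) * EE n m i) / of_nat n))"
      by (intro sum.cong refl) (simp add: Bw)
    also have "\<dots> = (\<Sum>i<n. \<Sum>m<n. c m * of_real (\<mu> m) * (EE n m i * cnj (w i))) / of_nat n"
      by (simp add: sum_divide_distrib sum_distrib_left algebra_simps)
    also have "(\<Sum>i<n. \<Sum>m<n. c m * of_real (\<mu> m) * (EE n m i * cnj (w i)))
        = (\<Sum>m<n. c m * of_real (\<mu> m) * cnj (c m))"
      by (subst sum.swap) (simp add: sum_distrib_left cc)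
    also have "\<dots> = (\<Sum>m<n. of_real (\<mu> m * (cmod (c m))^2))"
      by (intro sum.cong refl) (simp only: of_real_mult complex_norm_square mult_ac)
    finally show ?thesis by simp
  qed
  have W: "(\<Sum>i<n. (cmod (w i))^2) = (\<Sum>m<n. (cmod (c m))^2) / real n"
  proof -
    have "complex_of_real (\<Sum>i<n. (cmod (w i))^2) = (\<Sum>i<n. cnj (w i) * w i)"
      by (simp only: of_real_sum complex_norm_square mult.commute)
    also have "\<dots> = (\<Sum>i<n. cnj (w i) * ((\<Sum>m<n. c m * EE n m i) / of_nat n))"
      by (intro sum.cong refl) (metis compl lessThan_iff)
    also have "\<dots> = (\<Sum>i<n. \<Sum>m<n. c m * (EE n m i * cnj (w i))) / of_nat n"
      by (simp add: sum_divide_distrib sum_distrib_left algebra_simps)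
    also have "(\<Sum>i<n. \<Sum>m<n. c m * (EE n m i * cnj (w i))) = (\<Sum>m<n. c m * cnj (c m))"
      by (subst sum.swap) (simp add: sum_distrib_left cc)
    also have "\<dots> = (\<Sum>m<n. of_real ((cmod (c m))^2))"
      by (intro sum.cong refl) (simp only: complex_norm_square)
    finally have "complex_of_real (\<Sum>i<n. (cmod (w i))^2) = complex_of_real ((\<Sum>m<n. (cmod (c m))^2) / real n)"
      by simp
    then show ?thesis using of_real_eq_iff by blast
  qed
  have mu: "\<mu> m \<le> cot (pi / (2 * real n)) / 2" if "m < n" for m
  proof -
    have "cot (pi * real (2*m+1) / (2 * real n)) \<le> cot (pi / (2 * real n))"
    proof (rule cot_antimono)
      show "0 < pi / (2 * real n)" using n by simp
      show "pi / (2 * real n) \<le> pi * real (2*m+1) / (2 * real n)"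
        using n by (intro divide_right_mono) auto
      have "real (2*m+1) < 2 * real n" using that by linarith
      then have "pi * real (2*m+1) < pi * (2 * real n)" by simp
      then show "pi * real (2*m+1) / (2 * real n) < pi" using n by (simp add: field_simps)
    qed
    then show ?thesis unfolding \<mu>_def by simp
  qed
  have "Re (\<Sum>i<n. \<Sum>j<n. cnj (w i) * bb i j * w j) = (\<Sum>m<n. \<mu> m * (cmod (c m))^2) / real n"
    using Q by simp
  also have "\<dots> \<le> (\<Sum>m<n. cot (pi / (2 * real n)) / 2 * (cmod (c m))^2) / real n"
    using n mu by (intro divide_right_mono sum_mono mult_right_mono) auto
  also have "\<dots> = cot (pi / (2 * real n)) / 2 * (\<Sum>i<n. (cmod (w i))^2)"
    unfolding W by (simp add: sum_distrib_left)
  finally show ?thesis .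
qed

lemma Im_cnj_mult_Arg:
  "Im (cnj a * b) = cmod a * cmod b * sin (Arg b - Arg a)"
proof (cases "a = 0 \<or> b = 0")
  case True then show ?thesis by auto
next
  case False
  then have a: "a \<noteq> 0" and b: "b \<noteq> 0" by auto
  have "Im (cnj a * b) = Re a * Im b - Im a * Re b" by simp
  also have "\<dots> = cmod a * cmod b * (cos (Arg a) * sin (Arg b) - sin (Arg a) * cos (Arg b))"
    using a b by (simp add: cos_Arg sin_Arg field_simps)
  also have "\<dots> = cmod a * cmod b * sin (Arg b - Arg a)" by (simp add: sin_diff)
  finally show ?thesis .
qed

lemma Arg_upper:
  assumes "0 \<le> Im z" "\<not> (Im z = 0 \<and> Re z < 0)"
  shows "0 \<le> Arg z \<and> Arg z < pi"
proof (cases "z = 0")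
  case True then show ?thesis by (simp add: Arg_zero)
next
  case False
  have b: "- pi < Arg z" "Arg z \<le> pi" using Arg_bounded by auto
  have s: "sin (Arg z) \<ge> 0" using False assms by (simp add: sin_Arg)
  have "0 \<le> Arg z"
  proof (rule ccontr)
    assume "\<not> 0 \<le> Arg z"
    then have "0 < - Arg z" "- Arg z < pi" using b by auto
    then have "sin (- Arg z) > 0" by (rule sin_gt_zero)
    then show False using s by simp
  qed
  moreover have "Arg z \<noteq> pi"
  proof
    assume p: "Arg z = pi"
    have "Re z / cmod z = -1" using cos_Arg[OF False] p by simp
    then have "Re z < 0" using False by (simp add: divide_eq_eq)
    moreover have "Im z / cmod z = 0" using sin_Arg[OF False] p by simp
    then have "Im z = 0" using False by simp
    ultimately show False using assms by simp
  qed
  ultimately show ?thesis using b by auto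
qed

lemma abs_im_bound:
  fixes v :: "nat \<Rightarrow> complex"
  assumes n: "n > 0"
  shows "(\<Sum>i<n. \<Sum>j<n. \<bar>Im (cnj (v i) * v j)\<bar>) \<le> cot (pi / (2 * real n)) * (\<Sum>i<n. (cmod (v i))^2)"
proof -
  define u where "u i = (if 0 < Im (v i) \<or> (Im (v i) = 0 \<and> 0 \<le> Re (v i)) then v i else - v i)" for i
  have upm: "u i = v i \<or> u i = - v i" for i by (simp add: u_def)
  have u_abs: "\<bar>Im (cnj (u i) * u j)\<bar> = \<bar>Im (cnj (v i) * v j)\<bar>" for i j
    using upm[of i] upm[of j] by (elim disjE) simp_all
  have u_mod: "cmod (u i) = cmod (v i)" for i unfolding u_def by auto
  have u_arg: "0 \<le> Arg (u i) \<and> Arg (u i) < pi" for i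
    by (rule Arg_upper) (auto simp: u_def)
  define xs where "xs = sort_key (\<lambda>i. Arg (u i)) [0..<n]"
  define \<sigma> where "\<sigma> i = xs ! i" for i
  have lxs: "length xs = n" unfolding xs_def by simp
  have bij: "bij_betw \<sigma> {..<n} {..<n}"
  proof -
    have "bij_betw ((!) xs) {..<length xs} (set xs)"
      by (rule bij_betw_nth) (auto simp: xs_def)
    moreover have "set xs = {..<n}" unfolding xs_def by auto
    ultimately show ?thesis using lxs unfolding \<sigma>_def by (simp add: fun_eq_iff)
  qed
  have mono: "Arg (u (\<sigma> i)) \<le> Arg (u (\<sigma> j))" if "i \<le> j" "j < n" for i j
  proof -
    have "sorted (map (\<lambda>i. Arg (u i)) xs)" unfolding xs_def by simp
    then have "map (\<lambda>i. Arg (u i)) xs ! i \<le> map (\<lambda>i. Arg (u i)) xs ! j"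
      using that lxs by (intro sorted_nth_mono) auto
    then show ?thesis using that lxs by (simp add: \<sigma>_def)
  qed
  define w where "w i = u (\<sigma> i)" for i
  have w_pos: "Im (cnj (w i) * w j) \<ge> 0" if "i \<le> j" "j < n" for i j
  proof -
    have "Arg (w j) - Arg (w i) \<ge> 0" "Arg (w j) - Arg (w i) \<le> pi"
      using mono[OF that] u_arg[of "\<sigma> i"] u_arg[of "\<sigma> j"] unfolding w_def by auto
    then have "sin (Arg (w j) - Arg (w i)) \<ge> 0" by (intro sin_ge_zero)
    then show ?thesis unfolding Im_cnj_mult_Arg by simp
  qed
  have key: "\<bar>Im (cnj (w i) * w j)\<bar> = 2 * Re (cnj (w i) * bb i j * w j)"
    if "i < n" "j < n" for i j
  proof -
    have r: "2 * Re (cnj (w i) * bb i j * w j)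
        = (if i < j then 1 else if j < i then -1 else 0) * Im (cnj (w i) * w j)"
      unfolding bb_def by (simp add: Re_divide Im_divide field_simps)
    define a where "a = Im (cnj (w i) * w j)"
    define R where "R = Re (cnj (w i) * bb i j * w j)"
    have r': "2 * R = (if i < j then 1 else if j < i then -1 else 0) * a"
      unfolding a_def R_def by (rule r)
    consider "i < j" | "j < i" | "i = j" by linarith
    then have "\<bar>a\<bar> = 2 * R"
    proof cases
      case 1
      have "a \<ge> 0" unfolding a_def using w_pos[of i j] that 1 by simp
      then show ?thesis using r' 1 by simp
    next
      case 2
      have "Im (cnj (w j) * w i) \<ge> 0" using w_pos[of j i] that 2 by simp
      moreover have "a = - Im (cnj (w j) * w i)" unfolding a_def by simp
      ultimately have "a \<le> 0" by linarith
      then show ?thesis using r' 2 by simp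
    next
      case 3
      have "a = 0" unfolding a_def 3 by simp
      then show ?thesis using r' 3 by simp
    qed
    then show ?thesis unfolding a_def R_def .
  qed
  have "(\<Sum>i<n. \<Sum>j<n. \<bar>Im (cnj (v i) * v j)\<bar>) = (\<Sum>i<n. \<Sum>j<n. \<bar>Im (cnj (u i) * u j)\<bar>)"
    by (simp only: u_abs)
  also have "\<dots> = (\<Sum>i<n. \<Sum>j<n. \<bar>Im (cnj (w i) * w j)\<bar>)"
  proof -
    have "(\<Sum>i<n. \<Sum>j<n. \<bar>Im (cnj (w i) * w j)\<bar>) = (\<Sum>i<n. \<Sum>j<n. \<bar>Im (cnj (u (\<sigma> i)) * u j)\<bar>)"
      unfolding w_def by (intro sum.cong refl sum.reindex_bij_betw[OF bij])
    also have "\<dots> = (\<Sum>i<n. \<Sum>j<n. \<bar>Im (cnj (u i) * u j)\<bar>)"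
      by (rule sum.reindex_bij_betw[OF bij, where g = "\<lambda>i. \<Sum>j<n. \<bar>Im (cnj (u i) * u j)\<bar>"])
    finally show ?thesis by simp
  qed
  also have "\<dots> = (\<Sum>i<n. \<Sum>j<n. 2 * Re (cnj (w i) * bb i j * w j))"
    by (intro sum.cong refl) (metis key lessThan_iff)
  also have "\<dots> = 2 * Re (\<Sum>i<n. \<Sum>j<n. cnj (w i) * bb i j * w j)"
    by (simp add: Re_sum sum_distrib_left)
  also have "\<dots> \<le> 2 * (cot (pi / (2 * real n)) / 2 * (\<Sum>i<n. (cmod (w i))^2))"
    using quad_bound[OF n, of w] by simp
  also have "(\<Sum>i<n. (cmod (w i))^2) = (\<Sum>i<n. (cmod (v i))^2)"
  proof -
    have "(\<Sum>i<n. (cmod (w i))^2) = (\<Sum>i<n. (cmod (u i))^2)"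
      unfolding w_def by (rule sum.reindex_bij_betw[OF bij, where g = "\<lambda>i. (cmod (u i))^2"])
    then show ?thesis by (simp add: u_mod)
  qed
  finally show ?thesis by simp
qed


lemma upper_bound:
  assumes L: "std_laplacian n A" and ev: "eigenvalue (map_mat complex_of_real A) ev" and n: "n > 0"
  shows "Im ev \<le> 1 / (2 * real n) * cot (pi / (2 * real n))"
proof -
  define M where "M = map_mat complex_of_real A"
  have Ac: "A \<in> carrier_mat n n" using L unfolding std_laplacian_def by auto
  have off: "A $$ (i, j) \<le> 0 \<and> \<bar>A $$ (i, j)\<bar> \<le> 1 / real n" if "i < n" "j < n" "i \<noteq> j" for i j
    using L that unfolding std_laplacian_def by blast
  obtain v where v: "v \<in> carrier_vec n" "v \<noteq> 0\<^sub>v n" "M *\<^sub>v v = ev \<cdot>\<^sub>v v"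
    using ev Ac unfolding eigenvalue_def eigenvector_def M_def by auto
  define x where "x i = v $ i" for i
  have dv: "dim_vec v = n" using v by auto
  have row: "(\<Sum>j<n. complex_of_real (A $$ (i, j)) * x j) = ev * x i" if "i < n" for i
  proof -
    have "(M *\<^sub>v v) $ i = ev * x i" using v that dv unfolding x_def by simp
    moreover have "(M *\<^sub>v v) $ i = (\<Sum>j<n. complex_of_real (A $$ (i, j)) * x j)"
      using that Ac dv unfolding M_def x_def
      by (simp add: scalar_prod_def lessThan_atLeast0)
    ultimately show ?thesis by simp
  qed
  define N where "N = (\<Sum>i<n. (cmod (x i))^2)"
  have Npos: "N > 0"
  proof -
    obtain i where i: "i < n" "x i \<noteq> 0" using v dv unfolding x_def by (metis eq_vecI index_zero_vec)
    have "(cmod (x i))^2 \<le> N" unfolding N_def using i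
      by (intro member_le_sum) auto
    moreover have "(cmod (x i))^2 > 0" using i by simp
    ultimately show ?thesis by linarith
  qed
  define I where "I i j = Im (cnj (x i) * x j)" for i j
  have "(\<Sum>i<n. cnj (x i) * (\<Sum>j<n. complex_of_real (A $$ (i, j)) * x j)) = ev * complex_of_real N"
  proof -
    have "(\<Sum>i<n. cnj (x i) * (\<Sum>j<n. complex_of_real (A $$ (i, j)) * x j)) = (\<Sum>i<n. ev * (cnj (x i) * x i))"
      by (intro sum.cong refl) (simp add: row)
    also have "\<dots> = ev * complex_of_real N"
      unfolding N_def of_real_sum complex_norm_square by (simp add: sum_distrib_left mult_ac)
    finally show ?thesis .
  qed
  then have E: "ev * complex_of_real N = (\<Sum>i<n. \<Sum>j<n. cnj (x i) * (complex_of_real (A $$ (i, j)) * x j))"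
    by (simp only: sum_distrib_left)
  have z0: "Im (cnj z * z) = 0" for z :: complex by simp
  have pw: "Im (cnj a * (complex_of_real r * b)) = r * Im (cnj a * b)" for a b r
    by (simp add: algebra_simps)
  have "Im ev * N = Im (ev * complex_of_real N)" by simp
  also have "\<dots> = (\<Sum>i<n. \<Sum>j<n. Im (cnj (x i) * (complex_of_real (A $$ (i, j)) * x j)))"
    unfolding E by (simp only: Im_sum)
  also have "\<dots> = (\<Sum>i<n. \<Sum>j<n. A $$ (i, j) * I i j)"
    unfolding I_def pw ..
  also have "\<dots> \<le> (\<Sum>i<n. \<Sum>j<n. 1 / (2 * real n) * (\<bar>I i j\<bar> - I i j))"
  proof (intro sum_mono)
    fix i j assume i: "i \<in> {..<n}" and j: "j \<in> {..<n}"
    show "A $$ (i, j) * I i j \<le> 1 / (2 * real n) * (\<bar>I i j\<bar> - I i j)"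
    proof (cases "i = j")
      case True then show ?thesis by (simp add: I_def)
    next
      case False
      then have a: "A $$ (i, j) \<le> 0" "- (1 / real n) \<le> A $$ (i, j)" using off[of i j] i j by auto
      show ?thesis
      proof (cases "I i j \<ge> 0")
        case True
        then have "A $$ (i, j) * I i j \<le> 0" using a by (simp add: mult_nonpos_nonneg)
        then show ?thesis using True by simp
      next
        case False
        then have "A $$ (i, j) * I i j \<le> - (1 / real n) * I i j" using a by (intro mult_right_mono_neg) auto
        then show ?thesis using False by (simp add: field_simps)
      qed
    qed
  qed
  also have "\<dots> = 1 / (2 * real n) * ((\<Sum>i<n. \<Sum>j<n. \<bar>I i j\<bar>) - (\<Sum>i<n. \<Sum>j<n. I i j))"
    by (simp add: sum_distrib_left sum_subtractf right_diff_distrib)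
  also have "(\<Sum>i<n. \<Sum>j<n. I i j) = 0"
  proof -
    have "(\<Sum>i<n. \<Sum>j<n. I i j) = Im (cnj (\<Sum>i<n. x i) * (\<Sum>j<n. x j))"
      unfolding I_def by (simp add: sum_product cnj_sum Im_sum)
    also have "\<dots> = 0" by (rule z0)
    finally show ?thesis .
  qed
  also have "(\<Sum>i<n. \<Sum>j<n. \<bar>I i j\<bar>) \<le> cot (pi / (2 * real n)) * N"
    unfolding I_def N_def by (rule abs_im_bound[OF n])
  finally have "Im ev * N \<le> 1 / (2 * real n) * cot (pi / (2 * real n)) * N"
    using n by (simp add: divide_right_mono)
  then have "Im ev * N \<le> (1 / (2 * real n) * cot (pi / (2 * real n))) * N" by simp
  then show ?thesis using Npos by (rule mult_right_le_imp_le)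
qed



lemma sin_sum_tele:
  "2 * sin (x/2) * (\<Sum>j=1..k. sin (real j * x)) = cos (x/2) - cos ((2 * real k + 1) * x / 2)"
proof (induction k)
  case 0 then show ?case by simp
next
  case (Suc k)
  have "2 * sin (x/2) * (\<Sum>j=1..Suc k. sin (real j * x))
      = 2 * sin (x/2) * (\<Sum>j=1..k. sin (real j * x)) + 2 * sin (x/2) * sin (real (Suc k) * x)"
    by (simp add: distrib_left)
  also have "2 * sin (x/2) * sin (real (Suc k) * x)
      = cos ((2 * real k + 1) * x / 2) - cos ((2 * real (Suc k) + 1) * x / 2)"
  proof -
    have "cos ((2 * real k + 1) * x / 2) - cos ((2 * real (Suc k) + 1) * x / 2)
       = 2 * sin (((2 * real k + 1) * x / 2 + (2 * real (Suc k) + 1) * x / 2) / 2)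
           * sin (((2 * real (Suc k) + 1) * x / 2 - (2 * real k + 1) * x / 2) / 2)"
      by (rule cos_diff_cos)
    also have "((2 * real k + 1) * x / 2 + (2 * real (Suc k) + 1) * x / 2) / 2 = real (Suc k) * x"
      by (simp add: field_simps)
    also have "((2 * real (Suc k) + 1) * x / 2 - (2 * real k + 1) * x / 2) / 2 = x / 2"
      by (simp add: field_simps)
    finally show ?thesis by simp
  qed
  finally show ?case using Suc.IH by simp
qed

lemma sin_sum_value:
  assumes "odd n" "n \<ge> 3"
  shows "(\<Sum>j=1..(n - 1) div 2. sin (real j * (2 * pi / real n))) = cot (pi / (2 * real n)) / 2"
proof -
  define k where "k = (n - 1) div 2"
  define x where "x = 2 * pi / real n"
  define t where "t = pi / (2 * real n)"
  have nk: "2 * real k + 1 = real n"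
  proof -
    obtain m where m: "n = 2 * m + 1" using assms(1) by (auto elim: oddE)
    then have "k = m" unfolding k_def by simp
    then show ?thesis using m by simp
  qed
  have n0: "real n > 0" using assms by simp
  have c: "cos ((2 * real k + 1) * x / 2) = -1" unfolding nk x_def using n0 by simp
  have xt: "x / 2 = 2 * t" unfolding x_def t_def using n0 by (simp add: field_simps)
  have t0: "0 < t" unfolding t_def using n0 by simp
  have t1: "t < pi / 2" unfolding t_def using assms by (simp add: field_simps)
  have st: "sin t > 0" using t0 t1 by (intro sin_gt_zero) auto
  have ct: "cos t > 0" using t0 t1 by (intro cos_gt_zero) auto
  have "2 * sin (x/2) * (\<Sum>j=1..k. sin (real j * x)) = cos (x/2) + 1"
    using sin_sum_tele[of x k] c by simp
  then have "2 * (2 * sin t * cos t) * (\<Sum>j=1..k. sin (real j * x)) = 2 * cos t ^ 2"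
    unfolding xt sin_double cos_double_cos by simp
  then have "(\<Sum>j=1..k. sin (real j * x)) = cos t / (2 * sin t)"
    using st ct by (simp add: field_simps power2_eq_square)
  then show ?thesis unfolding k_def x_def t_def cot_def by simp
qed

lemma Im_lam:
  assumes "odd n" "n \<ge> 3"
  shows "Im (lam n ((n - 1) div 2)) = 1 / (2 * real n) * cot (pi / (2 * real n))"
proof -
  have e: "exp (- 2 * pi * \<i> * of_nat j / of_nat n) = cis (- (real j * (2 * pi / real n)))" for j
    unfolding cis_conv_exp by (rule arg_cong[where f = exp]) (simp add: field_simps)
  have "Im (lam n ((n - 1) div 2)) = (1 / real n) * (\<Sum>j=1..(n - 1) div 2. sin (real j * (2 * pi / real n)))"
    unfolding lam_def e by (simp add: Im_sum sum_negf)
  also have "\<dots> = 1 / (2 * real n) * cot (pi / (2 * real n))"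
    unfolding sin_sum_value[OF assms] by simp
  finally show ?thesis .
qed



lemma modf1:
  fixes i d n :: nat
  assumes "i < n" "d < n"
  shows "((i + d) mod n + n - i) mod n = d"
proof (cases "i + d < n")
  case True
  then have "(i + d) mod n = i + d" by simp
  then have "(i + d) mod n + n - i = d + n" by simp
  then show ?thesis using assms by simp
next
  case False
  then have "(i + d) mod n = i + d - n" using assms by (simp add: le_mod_geq)
  then have "(i + d) mod n + n - i = d" using False by simp
  then show ?thesis using assms by simp
qed

lemma modf2:
  fixes i j n :: nat
  assumes "i < n" "j < n"
  shows "(i + (j + n - i) mod n) mod n = j"
proof (cases "i \<le> j")
  case True
  then have "(j + n - i) mod n = j - i" using assms
    by (metis add.commute add_diff_assoc2 diff_less_Suc less_imp_diff_less mod_add_self2 mod_less)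
  then show ?thesis using True assms by simp
next
  case False
  then have "(j + n - i) mod n = j + n - i" using assms by simp
  then show ?thesis using False assms by simp
qed

lemma modf3:
  fixes i j n :: nat
  assumes "i < n" "j < n" "i \<noteq> j"
  shows "(j + n - i) mod n \<noteq> 0"
proof
  assume h: "(j + n - i) mod n = 0"
  have "(i + (j + n - i) mod n) mod n = j" by (rule modf2[OF assms(1,2)])
  then have "i = j" using h assms by simp
  then show False using assms by simp
qed

lemma reindex_rot:
  fixes g :: "nat \<Rightarrow> 'a::comm_monoid_add"
  assumes "i < n"
  shows "(\<Sum>j<n. g j) = (\<Sum>d<n. g ((i + d) mod n))"
proof -
  have "bij_betw (\<lambda>d. (i + d) mod n) {..<n} {..<n}"
  proof (rule bij_betw_byWitness[where f' = "\<lambda>j. (j + n - i) mod n"])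
    show "\<forall>a\<in>{..<n}. ((i + a) mod n + n - i) mod n = a" using modf1[OF assms] by auto
    show "\<forall>a\<in>{..<n}. (i + (a + n - i) mod n) mod n = a" using modf2[OF assms] by auto
    show "(\<lambda>d. (i + d) mod n) ` {..<n} \<subseteq> {..<n}" using assms by auto
    show "(\<lambda>j. (j + n - i) mod n) ` {..<n} \<subseteq> {..<n}" using assms by auto
  qed
  then show ?thesis by (rule sum.reindex_bij_betw[symmetric])
qed

lemma sum_indicator_range:
  fixes g :: "nat \<Rightarrow> 'a::comm_monoid_add"
  assumes "k < n"
  shows "(\<Sum>d<n. if 1 \<le> d \<and> d \<le> k then g d else 0) = (\<Sum>d=1..k. g d)"
proof -
  have "{..<n} \<inter> {d. 1 \<le> d \<and> d \<le> k} = {1..k}" using assms by auto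
  then show ?thesis by (simp add: sum.If_cases)
qed

lemma attain:
  assumes "odd n" "n \<ge> 3"
  shows "\<exists>A. std_laplacian n A \<and> eigenvalue (map_mat complex_of_real A) (lam n ((n - 1) div 2))"
proof -
  define k where "k = (n - 1) div 2"
  have kn: "k < n" unfolding k_def using assms by simp
  have n0: "n > 0" using assms by simp
  define f where "f d = (if d = 0 then real k / real n else if d \<le> k then - 1 / real n else 0)" for d
  have fsplit: "f d = (if d = 0 then real k / real n else 0) + (if 1 \<le> d \<and> d \<le> k then - 1 / real n else 0)" for d
    unfolding f_def by auto
  define A where "A = mat n n (\<lambda>(i, j). f ((j + n - i) mod n))"
  have Ac: "A \<in> carrier_mat n n" unfolding A_def by simp
  have Aij: "A $$ (i, j) = f ((j + n - i) mod n)" if "i < n" "j < n" for i j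
    unfolding A_def using that by simp
  have fsum: "(\<Sum>d<n. f d) = 0"
  proof -
    have "(\<Sum>d<n. f d) = (\<Sum>d<n. if d = 0 then real k / real n else 0) + (\<Sum>d<n. if 1 \<le> d \<and> d \<le> k then - 1 / real n else 0)"
      unfolding fsplit by (rule sum.distrib)
    also have "(\<Sum>d<n. if d = 0 then real k / real n else 0) = real k / real n" using n0 by simp
    also have "(\<Sum>d<n. if 1 \<le> d \<and> d \<le> k then - 1 / real n else 0) = (\<Sum>d=1..k. - 1 / real n)"
      by (rule sum_indicator_range[OF kn])
    finally show ?thesis by simp
  qed
  have std: "std_laplacian n A"
    unfolding std_laplacian_def
  proof (intro conjI allI impI)
    show "A \<in> carrier_mat n n" by (rule Ac)
    fix i assume i: "i < n"
    have "(\<Sum>j<n. A $$ (i, j)) = (\<Sum>j<n. f ((j + n - i) mod n))" using Aij i by simp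
    also have "\<dots> = (\<Sum>d<n. f (((i + d) mod n + n - i) mod n))" by (rule reindex_rot[OF i])
    also have "\<dots> = (\<Sum>d<n. f d)" using modf1[OF i] by simp
    finally show "(\<Sum>j<n. A $$ (i, j)) = 0" using fsum by simp
    fix j assume j: "j < n" and ij: "i \<noteq> j"
    have nz: "(j + n - i) mod n \<noteq> 0" by (rule modf3[OF i j ij])
    show "A $$ (i, j) \<le> 0" using Aij[OF i j] nz unfolding f_def by auto
    show "\<bar>A $$ (i, j)\<bar> \<le> 1 / real n" using Aij[OF i j] nz unfolding f_def by auto
  qed
  define \<omega> where "\<omega> = cis (- (2 * pi / real n))"
  have wn: "\<omega> ^ n = 1"
  proof -
    have "\<omega> ^ n = cis (- (2 * pi))" unfolding \<omega>_def DeMoivre using n0 by simp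
    also have "\<dots> = 1" by (simp add: cis_cnj[symmetric])
    finally show ?thesis .
  qed
  have wmod: "\<omega> ^ m = \<omega> ^ (m mod n)" for m
  proof -
    have "\<omega> ^ m = \<omega> ^ (n * (m div n) + m mod n)" by simp
    also have "\<dots> = (\<omega> ^ n) ^ (m div n) * \<omega> ^ (m mod n)" by (simp only: power_add power_mult)
    finally show ?thesis using wn by simp
  qed
  have e: "exp (- 2 * pi * \<i> * of_nat j / of_nat n) = \<omega> ^ j" for j
  proof -
    have "exp (- 2 * pi * \<i> * of_nat j / of_nat n) = cis (real j * (- (2 * pi / real n)))"
      unfolding cis_conv_exp by (rule arg_cong[where f = exp]) (simp add: field_simps)
    then show ?thesis unfolding \<omega>_def DeMoivre .
  qed
  have lamv: "(\<Sum>d<n. complex_of_real (f d) * \<omega> ^ d) = lam n k"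
  proof -
    have "(\<Sum>d<n. complex_of_real (f d) * \<omega> ^ d)
        = (\<Sum>d<n. if d = 0 then complex_of_real (real k / real n) else 0)
          + (\<Sum>d<n. if 1 \<le> d \<and> d \<le> k then - (\<omega> ^ d) / of_nat n else 0)"
      unfolding sum.distrib[symmetric] by (intro sum.cong refl) (auto simp: f_def)
    also have "(\<Sum>d<n. if d = 0 then complex_of_real (real k / real n) else 0) = complex_of_real (real k / real n)"
      using n0 by simp
    also have "(\<Sum>d<n. if 1 \<le> d \<and> d \<le> k then - (\<omega> ^ d) / of_nat n else 0) = (\<Sum>d=1..k. - (\<omega> ^ d) / of_nat n)"
      by (rule sum_indicator_range[OF kn])
    also have "complex_of_real (real k / real n) + (\<Sum>d=1..k. - (\<omega> ^ d) / of_nat n) = lam n k"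
      unfolding lam_def e using n0 by (simp add: sum_negf sum_divide_distrib[symmetric] field_simps)
    finally show ?thesis .
  qed
  define M where "M = map_mat complex_of_real A"
  define v where "v = vec n (\<lambda>j. \<omega> ^ j)"
  have Mv: "M *\<^sub>v v = lam n k \<cdot>\<^sub>v v"
  proof (rule eq_vecI)
    show "dim_vec (M *\<^sub>v v) = dim_vec (lam n k \<cdot>\<^sub>v v)" unfolding M_def v_def using Ac by simp
    fix i assume "i < dim_vec (lam n k \<cdot>\<^sub>v v)"
    then have i: "i < n" unfolding v_def by simp
    have "(M *\<^sub>v v) $ i = (\<Sum>j<n. complex_of_real (f ((j + n - i) mod n)) * \<omega> ^ j)"
      unfolding M_def v_def using i Ac Aij[OF i]
      by (simp add: scalar_prod_def lessThan_atLeast0)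
    also have "\<dots> = (\<Sum>d<n. complex_of_real (f (((i + d) mod n + n - i) mod n)) * \<omega> ^ ((i + d) mod n))"
      by (rule reindex_rot[OF i])
    also have "\<dots> = (\<Sum>d<n. \<omega> ^ i * (complex_of_real (f d) * \<omega> ^ d))"
      by (intro sum.cong refl) (simp add: modf1[OF i] wmod[symmetric] power_add)
    also have "\<dots> = \<omega> ^ i * lam n k" by (simp add: sum_distrib_left[symmetric] lamv)
    also have "\<dots> = (lam n k \<cdot>\<^sub>v v) $ i" unfolding v_def using i by simp
    finally show "(M *\<^sub>v v) $ i = (lam n k \<cdot>\<^sub>v v) $ i" .
  qed
  have v0: "v \<noteq> 0\<^sub>v n"
  proof
    assume "v = 0\<^sub>v n"
    then have "v $ 0 = 0" using n0 by simp
    then show False unfolding v_def using n0 by simp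
  qed
  have "eigenvalue M (lam n k)"
    unfolding eigenvalue_def eigenvector_def
    using Mv v0 Ac by (intro exI[of _ v]) (simp add: M_def v_def)
  then show ?thesis using std unfolding M_def k_def by blast
qed


theorem theorem10:
  fixes n :: nat
  assumes "odd n" and "n \<ge> 3"
  shows "h n = 1 / (2 * real n) * cot (pi / (2 * real n))
         \<and> h n = Im (lam n ((n - 1) div 2))"
proof -
  define C where "C = 1 / (2 * real n) * cot (pi / (2 * real n))"
  have n0: "n > 0" using assms by simp
  have mem: "C \<in> {Im ev | ev A. std_laplacian n A \<and> eigenvalue (map_mat complex_of_real A) ev}"
  proof -
    obtain A where "std_laplacian n A" "eigenvalue (map_mat complex_of_real A) (lam n ((n - 1) div 2))"
      using attain[OF assms] by blast
    moreover have "Im (lam n ((n - 1) div 2)) = C" unfolding C_def by (rule Im_lam[OF assms])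
    ultimately show ?thesis by blast
  qed
  have ub: "x \<le> C" if "x \<in> {Im ev | ev A. std_laplacian n A \<and> eigenvalue (map_mat complex_of_real A) ev}" for x
    using that upper_bound[OF _ _ n0] unfolding C_def by blast
  have "h n = C" unfolding h_def by (rule cSup_eq_maximum[OF mem ub])
  then show ?thesis using Im_lam[OF assms] unfolding C_def by simp
qed

end
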